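(* For every positive integer $m$, $d(m)=|N/P_{J(m)}|$, where $N$ is the multiplicative semigroup of all positive integers, $J(m)=mN$ is the ideal of $N$ generated by $m$, and $P_{J(m)}$ is the principal congruence on $N$ defined by $J(m)$.
   Context: $d(m)$ is the number of positive divisors of $m$. For a semigroup $S$, $H\subseteq S$, $a\in S$: $H\dots a=\{(x,y)\in S\times S: xay\in H\}$ and $P_H=\{(a,b)\in S\times S: H\dots a=H\dots b\}$. *)

theory Defs
  imports Main
begin

definition num_divisors :: "nat \<Rightarrow> nat" where
  "num_divisors m = card {k. k dvd m}"

definition sg_res :: "'a set \<Rightarrow> ('a \<Rightarrow> 'a \<Rightarrow> 'a) \<Rightarrow> 'a set \<Rightarrow> 'a \<Rightarrow> ('a \<times> 'a) set" where
  "sg_res S mult H a = {(x, y). x \<in> S \<and> y \<in> S \<and> mult (mult x a) y \<in> H}"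

definition princ_cong :: "'a set \<Rightarrow> ('a \<Rightarrow> 'a \<Rightarrow> 'a) \<Rightarrow> 'a set \<Rightarrow> 'a rel" where
  "princ_cong S mult H = {(a, b). a \<in> S \<and> b \<in> S \<and> sg_res S mult H a = sg_res S mult H b}"

definition posN :: "nat set" where
  "posN = {n. 0 < n}"

definition J_ideal :: "nat \<Rightarrow> nat set" where
  "J_ideal m = {m * n | n. n \<in> posN}"

end

theory Submission
  imports Defs
begin

lemma key_dvd:
  fixes m a k :: nat
  assumes "0 < m" "0 < a"
  shows "m dvd a * k \<longleftrightarrow> (m div gcd a m) dvd k"
proof -
  define g where "g = gcd a m"
  have gpos: "g > 0" using assms by (simp add: g_def)
  obtain a' where a': "a = g * a'" unfolding g_def by (metis gcd_dvd1 dvdE)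
  obtain m' where m': "m = g * m'" unfolding g_def by (metis gcd_dvd2 dvdE)
  have cop: "coprime a' m'"
    using a' m' gpos g_def
    by (metis div_gcd_coprime gcd_eq_0_iff mult_pos_pos nonzero_mult_div_cancel_left not_gr0 assms(2) neq0_conv)
  have "m div g = m'" using m' gpos by simp
  moreover have "m dvd a * k \<longleftrightarrow> m' dvd a' * k"
    using a' m' gpos by (simp add: mult.assoc)
  moreover have "m' dvd a' * k \<longleftrightarrow> m' dvd k"
    using cop by (simp add: coprime_dvd_mult_right_iff coprime_commute)
  ultimately show ?thesis by (simp add: g_def)
qed

lemma J_eq: "0 < m \<Longrightarrow> J_ideal m = {k. 0 < k \<and> m dvd k}"
  unfolding J_ideal_def posN_def by (auto elim!: dvdE)

lemma res_eq:
  assumes "0 < m" "0 < a"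
  shows "sg_res posN (*) (J_ideal m) a = {(x,y). 0 < x \<and> 0 < y \<and> (m div gcd a m) dvd x * y}"
proof -
  have "\<And>x y. m dvd x * a * y \<longleftrightarrow> (m div gcd a m) dvd x * y"
    using key_dvd[OF assms] by (metis mult.commute mult.left_commute)
  thus ?thesis using assms unfolding sg_res_def J_eq[OF assms(1)] posN_def by auto
qed

lemma cong_eq:
  assumes "0 < m"
  shows "princ_cong posN (*) (J_ideal m) = {(a,b). 0 < a \<and> 0 < b \<and> gcd a m = gcd b m}"
proof -
  have "sg_res posN (*) (J_ideal m) a = sg_res posN (*) (J_ideal m) b \<longleftrightarrow> gcd a m = gcd b m"
    if "0 < a" "0 < b" for a b
  proof
    assume "gcd a m = gcd b m" thus "sg_res posN (*) (J_ideal m) a = sg_res posN (*) (J_ideal m) b"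
      using res_eq[OF assms that(1)] res_eq[OF assms that(2)] by simp
  next
    assume h: "sg_res posN (*) (J_ideal m) a = sg_res posN (*) (J_ideal m) b"
    have "\<And>k. 0 < k \<Longrightarrow> (m div gcd a m) dvd k \<longleftrightarrow> (m div gcd b m) dvd k"
    proof -
      fix k :: nat assume "0 < k"
      have "(1,k) \<in> sg_res posN (*) (J_ideal m) a \<longleftrightarrow> (1,k) \<in> sg_res posN (*) (J_ideal m) b"
        using h by simp
      thus "(m div gcd a m) dvd k \<longleftrightarrow> (m div gcd b m) dvd k"
        using res_eq[OF assms that(1)] res_eq[OF assms that(2)] \<open>0 < k\<close> by simp
    qed
    moreover have pa: "m div gcd a m > 0" "m div gcd b m > 0"
      using assms by (auto simp: div_greater_zero_iff gcd_le2_nat)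
    ultimately have "m div gcd a m = m div gcd b m"
      by (meson dvd_antisym dvd_refl)
    hence "m div (m div gcd a m) = m div (m div gcd b m)" by simp
    thus "gcd a m = gcd b m"
      using assms by (simp add: div_div_eq_right)
  qed
  thus ?thesis unfolding princ_cong_def posN_def by auto
qed

theorem theorem6:
  fixes m :: nat
  assumes "0 < m"
  shows "num_divisors m = card (posN // princ_cong posN (*) (J_ideal m))"
proof -
  define R where "R = princ_cong posN (*) (J_ideal m)"
  have R: "\<And>a b. (a,b) \<in> R \<longleftrightarrow> 0 < a \<and> 0 < b \<and> gcd a m = gcd b m"
    unfolding R_def cong_eq[OF assms] by simp
  define C where "C = (\<lambda>d::nat. {b. 0 < b \<and> gcd b m = d})"
  have cls: "R `` {a} = C (gcd a m)" if "0 < a" for a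
  proof -
    have "R `` {a} = {b. (a,b) \<in> R}" by blast
    also have "\<dots> = {b. 0 < b \<and> gcd b m = gcd a m}" using that by (simp add: R eq_commute)
    finally show ?thesis by (simp add: C_def)
  qed
  have q: "posN // R = C ` {d. d dvd m}"
  proof
    show "posN // R \<subseteq> C ` {d. d dvd m}"
    proof
      fix X assume "X \<in> posN // R"
      then obtain a where a0: "a \<in> posN" and a: "X = R `` {a}"
        by (rule quotientE)
      have a1: "0 < a" using a0 by (simp add: posN_def)
      have "X = C (gcd a m)" using cls[OF a1] a by simp
      moreover have "gcd a m dvd m" by simp
      ultimately show "X \<in> C ` {d. d dvd m}" by blast
    qed
  next
    show "C ` {d. d dvd m} \<subseteq> posN // R"
    proof
      fix X assume "X \<in> C ` {d. d dvd m}"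
      then obtain d where d: "d dvd m" "X = C d" by blast
      have dp: "0 < d" using d assms by (metis dvd_0_left_iff neq0_conv)
      have "gcd d m = d" using d by (simp add: gcd_nat.absorb1)
      hence "X = R `` {d}" using cls[OF dp] d by simp
      moreover have "d \<in> posN" using dp by (simp add: posN_def)
      ultimately show "X \<in> posN // R"
        unfolding quotient_def by blast
    qed
  qed
  have "inj_on C {d. d dvd m}"
  proof (rule inj_onI)
    fix d e assume h: "d \<in> {d. d dvd m}" "e \<in> {d. d dvd m}" "C d = C e"
    have dp: "0 < d" using h assms by (metis mem_Collect_eq dvd_0_left_iff neq0_conv)
    have gd: "gcd d m = d" using h by (simp add: gcd_nat.absorb1)
    have "d \<in> C d" using dp gd by (simp add: C_def)
    hence "d \<in> C e" using h by simp
    thus "d = e" using gd by (simp add: C_def)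
  qed
  hence "card (C ` {d. d dvd m}) = card {d. d dvd m}" by (rule card_image)
  thus ?thesis unfolding num_divisors_def R_def[symmetric] q by simp
qed

end
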